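(* Let $(P_t)_{t\ge0}$ be a transition semigroup on a Polish space $\mathcal X$ (Feller and stochastically continuous). For all $k\ge1$ and $t_1,\dots,t_k>0$, \[\limsup_{T\to\infty}\sup_{\mu\in\mathcal M_1}\|Q^{T,t_k,\dots,t_1}\mu-Q^T\mu\|_{\mathrm{TV}}=0.\]
   Context: $\mathcal M_1$ is the set of Borel probability measures on $\mathcal X$, $P_t^*\mu(B)=\int P_t\mathbf 1_B\,d\mu$, $Q^T\mu:=T^{-1}\int_0^TP_s^*\mu\,ds$ for $T>0$, and $Q^{t_k,\dots,t_1}\mu:=Q^{t_k}\cdots Q^{t_1}\mu$, so $Q^{T,t_k,\dots,t_1}\mu=Q^TQ^{t_k}\cdots Q^{t_1}\mu$. $\|\cdot\|_{\mathrm{TV}}$ is the total variation norm. *)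

theory Defs
  imports "HOL-Probability.Probability"
begin

text \<open>A transition semigroup on a Polish space, given by its transition
probability kernels K t x = P_t(x, .), with P_t f x = integral of f w.r.t. K t x.\<close>

definition transition_semigroup :: "(real \<Rightarrow> 'a::polish_space \<Rightarrow> 'a measure) \<Rightarrow> bool" where
  "transition_semigroup K \<longleftrightarrow>
     (\<forall>t\<ge>0. K t \<in> borel \<rightarrow>\<^sub>M prob_algebra borel) \<and>
     (\<forall>x. K 0 x = return borel x) \<and>
     (\<forall>s\<ge>0. \<forall>t\<ge>0. \<forall>x. K (s + t) x = K s x \<bind> K t)"

definition feller :: "(real \<Rightarrow> 'a::polish_space \<Rightarrow> 'a measure) \<Rightarrow> bool" where
  "feller K \<longleftrightarrow> (\<forall>t\<ge>0. \<forall>f::'a \<Rightarrow> real. continuous_on UNIV f \<and> bounded (range f) \<longrightarrow>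
      continuous_on UNIV (\<lambda>x. \<integral>y. f y \<partial>(K t x)))"

definition stoch_continuous :: "(real \<Rightarrow> 'a::polish_space \<Rightarrow> 'a measure) \<Rightarrow> bool" where
  "stoch_continuous K \<longleftrightarrow> (\<forall>f::'a \<Rightarrow> real. \<forall>x. continuous_on UNIV f \<and> bounded (range f) \<longrightarrow>
      ((\<lambda>t. \<integral>y. f y \<partial>(K t x)) \<longlongrightarrow> f x) (at_right 0))"

definition M1 :: "'a::topological_space measure set" where
  "M1 = {\<mu>. prob_space \<mu> \<and> sets \<mu> = sets borel}"

definition Pstar :: "(real \<Rightarrow> 'a::polish_space \<Rightarrow> 'a measure) \<Rightarrow> real \<Rightarrow> 'a measure \<Rightarrow> 'a measure" where
  "Pstar K t \<mu> = \<mu> \<bind> K t"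

definition Qavg :: "(real \<Rightarrow> 'a::polish_space \<Rightarrow> 'a measure) \<Rightarrow> real \<Rightarrow> 'a measure \<Rightarrow> 'a measure" where
  "Qavg K T \<mu> = measure_of (space borel) (sets borel)
     (\<lambda>B. ennreal (1 / T) * (\<integral>\<^sup>+ s\<in>{0..T}. emeasure (Pstar K s \<mu>) B \<partial>lborel))"

text \<open>Q^{t_k,...,t_1} mu = Q^{t_k} ... Q^{t_1} mu, with ts = [t_1, ..., t_k] (t_1 applied first).\<close>
definition Qiter :: "(real \<Rightarrow> 'a::polish_space \<Rightarrow> 'a measure) \<Rightarrow> real list \<Rightarrow> 'a measure \<Rightarrow> 'a measure" where
  "Qiter K ts \<mu> = foldl (\<lambda>\<nu> t. Qavg K t \<nu>) \<mu> ts"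

text \<open>Total variation norm of the signed measure mu - nu (probability measures):
  |mu - nu|(X) = 2 sup_B |mu B - nu B|.\<close>
definition tv_norm :: "'a::topological_space measure \<Rightarrow> 'a measure \<Rightarrow> real" where
  "tv_norm \<mu> \<nu> = 2 * (SUP B\<in>sets borel. \<bar>measure \<mu> B - measure \<nu> B\<bar>)"

end

theory Submission
  imports Defs
begin


lemma shift_int:
  fixes g :: "real \<Rightarrow> ennreal"
  assumes g[measurable]: "g \<in> borel_measurable borel"
  shows "(\<integral>\<^sup>+s. g (r + s) * indicator {0..T} s \<partial>lborel) = (\<integral>\<^sup>+u. g u * indicator {r..r+T} u \<partial>lborel)"
proof -
  have "(\<integral>\<^sup>+u. g u * indicator {r..r+T} u \<partial>lborel) = (\<integral>\<^sup>+s. g (r + s) * indicator {r..r+T} (r + s) \<partial>lborel)"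
    using nn_integral_real_affine[of "\<lambda>u. g u * indicator {r..r+T} u" 1 r] by simp
  also have "\<dots> = (\<integral>\<^sup>+s. g (r + s) * indicator {0..T} s \<partial>lborel)"
    by (intro nn_integral_cong) (auto simp: indicator_def)
  finally show ?thesis by simp
qed

lemma int_ind_le:
  fixes g :: "real \<Rightarrow> ennreal"
  assumes "\<And>u. g u \<le> 1" "a \<le> b"
  shows "(\<integral>\<^sup>+u. g u * indicator {a..b} u \<partial>lborel) \<le> ennreal (b - a)"
proof -
  have "(\<integral>\<^sup>+u. g u * indicator {a..b} u \<partial>lborel) \<le> (\<integral>\<^sup>+u. 1 * indicator {a..b} u \<partial>lborel)"
    by (intro nn_integral_mono mult_right_mono assms) auto
  also have "\<dots> = ennreal (b - a)" using assms(2) by (subst nn_integral_cmult_indicator) auto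
  finally show ?thesis .
qed

lemma shift_bounds:
  fixes g :: "real \<Rightarrow> ennreal"
  assumes g[measurable]: "g \<in> borel_measurable borel" and g1: "\<And>u. g u \<le> 1" and r: "r \<ge> 0"
  shows "(\<integral>\<^sup>+s. g (r + s) * indicator {0..T} s \<partial>lborel) \<le> (\<integral>\<^sup>+u. g u * indicator {0..T} u \<partial>lborel) + ennreal r"
    and "(\<integral>\<^sup>+u. g u * indicator {0..T} u \<partial>lborel) \<le> (\<integral>\<^sup>+s. g (r + s) * indicator {0..T} s \<partial>lborel) + ennreal r"
proof -
  show "(\<integral>\<^sup>+s. g (r + s) * indicator {0..T} s \<partial>lborel) \<le> (\<integral>\<^sup>+u. g u * indicator {0..T} u \<partial>lborel) + ennreal r"
  proof -
    have "(\<integral>\<^sup>+u. g u * indicator {r..r+T} u \<partial>lborel) \<le> (\<integral>\<^sup>+u. g u * indicator {0..T} u + g u * indicator {T..T+r} u \<partial>lborel)"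
      using r by (intro nn_integral_mono) (auto simp: indicator_def)
    also have "\<dots> = (\<integral>\<^sup>+u. g u * indicator {0..T} u \<partial>lborel) + (\<integral>\<^sup>+u. g u * indicator {T..T+r} u \<partial>lborel)"
      by (rule nn_integral_add) auto
    also have "\<dots> \<le> (\<integral>\<^sup>+u. g u * indicator {0..T} u \<partial>lborel) + ennreal r"
      using int_ind_le[OF g1, of T "T+r"] r by (intro add_left_mono) auto
    finally show ?thesis by (simp add: shift_int)
  qed
  show "(\<integral>\<^sup>+u. g u * indicator {0..T} u \<partial>lborel) \<le> (\<integral>\<^sup>+s. g (r + s) * indicator {0..T} s \<partial>lborel) + ennreal r"
  proof -
    have "(\<integral>\<^sup>+u. g u * indicator {0..T} u \<partial>lborel) \<le> (\<integral>\<^sup>+u. g u * indicator {r..r+T} u + g u * indicator {0..r} u \<partial>lborel)"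
      using r by (intro nn_integral_mono) (auto simp: indicator_def)
    also have "\<dots> = (\<integral>\<^sup>+u. g u * indicator {r..r+T} u \<partial>lborel) + (\<integral>\<^sup>+u. g u * indicator {0..r} u \<partial>lborel)"
      by (rule nn_integral_add) auto
    also have "\<dots> \<le> (\<integral>\<^sup>+u. g u * indicator {r..r+T} u \<partial>lborel) + ennreal r"
      using int_ind_le[OF g1, of 0 r] r by (intro add_left_mono) auto
    finally show ?thesis by (simp add: shift_int)
  qed
qed

lemma double_bounds:
  fixes g :: "real \<Rightarrow> ennreal" and t T :: real
  assumes g[measurable]: "g \<in> borel_measurable borel" and g1: "\<And>u. g u \<le> 1" and t: "t > 0"
  defines "y \<equiv> (\<integral>\<^sup>+u. g u * indicator {0..T} u \<partial>lborel)"
  defines "X \<equiv> (\<integral>\<^sup>+s. (\<integral>\<^sup>+r. g (r + s) * indicator {0..t} r \<partial>lborel) * indicator {0..T} s \<partial>lborel)"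
  shows "X \<le> ennreal t * y + ennreal (t * t)" and "ennreal t * y \<le> X + ennreal (t * t)"
proof -
  define x where "x r = (\<integral>\<^sup>+s. g (r + s) * indicator {0..T} s \<partial>lborel)" for r
  have jm: "(\<lambda>(r, s). g (r + s) * indicator {0..t} r * indicator {0..T} s) \<in> borel_measurable (lborel \<Otimes>\<^sub>M lborel)"
    by measurable
  have xm: "(\<lambda>r. indicator {0..t} r * x r) \<in> borel_measurable lborel"
  proof -
    have "(\<lambda>r. \<integral>\<^sup>+s. g (r + s) * indicator {0..t} r * indicator {0..T} s \<partial>lborel) \<in> borel_measurable lborel"
      using jm by (rule lborel.borel_measurable_nn_integral)
    moreover have "(\<integral>\<^sup>+s. g (r + s) * indicator {0..t} r * indicator {0..T} s \<partial>lborel) = indicator {0..t} r * x r" for r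
      unfolding x_def by (subst nn_integral_cmult[symmetric]) (auto simp: ac_simps)
    ultimately show ?thesis by simp
  qed
  have X: "X = (\<integral>\<^sup>+r. indicator {0..t} r * x r \<partial>lborel)"
  proof -
    have "X = (\<integral>\<^sup>+s. \<integral>\<^sup>+r. g (r + s) * indicator {0..t} r * indicator {0..T} s \<partial>lborel \<partial>lborel)"
      unfolding X_def by (intro nn_integral_cong) (auto simp: nn_integral_multc)
    also have "\<dots> = (\<integral>\<^sup>+r. \<integral>\<^sup>+s. g (r + s) * indicator {0..t} r * indicator {0..T} s \<partial>lborel \<partial>lborel)"
      by (rule lborel_pair.Fubini') (use jm in simp)
    also have "\<dots> = (\<integral>\<^sup>+r. indicator {0..t} r * x r \<partial>lborel)"
      unfolding x_def by (intro nn_integral_cong) (subst nn_integral_cmult[symmetric], auto simp: ac_simps)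
    finally show ?thesis .
  qed
  have ct: "(\<integral>\<^sup>+r. indicator {0..t} r * c \<partial>lborel) = ennreal t * c" for c
    using nn_integral_cmult_indicator[of "{0..t}" lborel c] t by (simp add: mult.commute)
  show "X \<le> ennreal t * y + ennreal (t * t)"
  proof -
    have "X \<le> (\<integral>\<^sup>+r. indicator {0..t} r * (y + ennreal t) \<partial>lborel)"
      unfolding X
    proof (intro nn_integral_mono)
      fix r show "indicator {0..t} r * x r \<le> indicator {0..t} r * (y + ennreal t)"
      proof (cases "r \<in> {0..t}")
        case True
        then have "x r \<le> y + ennreal r" using shift_bounds(1)[OF g g1, of r T] by (simp add: x_def y_def)
        also have "\<dots> \<le> y + ennreal t" using True by (intro add_left_mono ennreal_leI) auto
        finally show ?thesis by (intro mult_left_mono) auto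
      qed simp
    qed
    also have "\<dots> = ennreal t * y + ennreal (t * t)" unfolding ct using t
      by (simp add: distrib_left ennreal_mult)
    finally show ?thesis .
  qed
  show "ennreal t * y \<le> X + ennreal (t * t)"
  proof -
    have "ennreal t * y = (\<integral>\<^sup>+r. indicator {0..t} r * y \<partial>lborel)" by (simp add: ct)
    also have "\<dots> \<le> (\<integral>\<^sup>+r. indicator {0..t} r * x r + indicator {0..t} r * ennreal t \<partial>lborel)"
    proof (intro nn_integral_mono)
      fix r show "indicator {0..t} r * y \<le> indicator {0..t} r * x r + indicator {0..t} r * ennreal t"
      proof (cases "r \<in> {0..t}")
        case True
        then have "y \<le> x r + ennreal r" using shift_bounds(2)[OF g g1, of r T] by (simp add: x_def y_def)
        also have "\<dots> \<le> x r + ennreal t" using True by (intro add_left_mono ennreal_leI) auto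
        finally show ?thesis using True by simp
      qed simp
    qed
    also have "\<dots> = X + (\<integral>\<^sup>+r. indicator {0..t} r * ennreal t \<partial>lborel)"
      unfolding X by (rule nn_integral_add) (use xm in auto)
    also have "\<dots> = X + ennreal (t * t)" unfolding ct using t by (simp add: ennreal_mult)
    finally show ?thesis .
  qed
qed



lemma prob_integral_bound:
  fixes f :: "'b \<Rightarrow> real"
  assumes "prob_space M" "f \<in> borel_measurable M" "\<And>x. \<bar>f x\<bar> \<le> C"
  shows "\<bar>\<integral>x. f x \<partial>M\<bar> \<le> C"
proof -
  interpret prob_space M by fact
  have i: "integrable M f" using assms by (intro integrable_const_bound[where B=C]) auto
  have "(\<integral>x. f x \<partial>M) \<le> C" using assms(3) by (intro integral_le_const[OF i]) (auto simp: abs_le_iff)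
  moreover have "- C \<le> (\<integral>x. f x \<partial>M)" using assms(3) by (intro integral_ge_const[OF i]) (simp add: abs_le_iff minus_le_iff)
  ultimately show ?thesis by auto
qed

locale tsg =
  fixes K :: "real \<Rightarrow> 'a::polish_space \<Rightarrow> 'a measure"
  assumes sg: "transition_semigroup K" and sc: "stoch_continuous K"
begin

lemma K_prob: "t \<ge> 0 \<Longrightarrow> K t \<in> borel \<rightarrow>\<^sub>M prob_algebra borel"
  using sg by (auto simp: transition_semigroup_def)

lemma K_sub: "t \<ge> 0 \<Longrightarrow> K t \<in> borel \<rightarrow>\<^sub>M subprob_algebra borel"
  using K_prob measurable_prob_algebraD by blast

lemma K_x: assumes "t \<ge> 0" shows "prob_space (K t x)" "sets (K t x) = sets borel"
proof -
  have "K t x \<in> space (prob_algebra borel)" using measurable_space[OF K_prob[OF assms]] by auto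
  then show "prob_space (K t x)" "sets (K t x) = sets borel" by (auto simp: space_prob_algebra)
qed

lemma K_add: "s \<ge> 0 \<Longrightarrow> t \<ge> 0 \<Longrightarrow> K (s + t) x = K s x \<bind> K t"
  using sg by (auto simp: transition_semigroup_def)

lemma K_0: "K 0 x = return borel x"
  using sg by (auto simp: transition_semigroup_def)

lemma M1_space: "\<nu> \<in> M1 \<Longrightarrow> \<nu> \<in> space (prob_algebra borel)"
  by (auto simp: M1_def space_prob_algebra)

lemma M1_bind: assumes "\<nu> \<in> M1" "t \<ge> 0" shows "\<nu> \<bind> K t \<in> M1"
  using prob_space_bind'[OF M1_space[OF assms(1)] K_prob[OF assms(2)]]
    sets_bind'[OF M1_space[OF assms(1)] K_prob[OF assms(2)]] by (auto simp: M1_def)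

lemma M1_D: assumes "\<nu> \<in> M1" shows "prob_space \<nu>" "sets \<nu> = sets borel" "space \<nu> = UNIV"
proof -
  show "prob_space \<nu>" "sets \<nu> = sets borel" using assms by (auto simp: M1_def)
  then show "space \<nu> = UNIV" using sets_eq_imp_space_eq[of \<nu> borel] by simp
qed

lemma bind_assoc_K: assumes "\<nu> \<in> M1" "s \<ge> 0" "t \<ge> 0"
  shows "\<nu> \<bind> K s \<bind> K t = \<nu> \<bind> K (s + t)"
proof -
  have "\<nu> \<bind> K s \<bind> K t = \<nu> \<bind> (\<lambda>x. K s x \<bind> K t)"
    by (rule bind_assoc) (use K_sub[OF assms(2)] K_sub[OF assms(3)] M1_D[OF assms(1)] in
       \<open>auto cong: measurable_cong_sets\<close>)
  also have "(\<lambda>x. K s x \<bind> K t) = K (s + t)" using K_add[OF assms(2,3)] by auto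
  hence "\<nu> \<bind> (\<lambda>x. K s x \<bind> K t) = \<nu> \<bind> K (s + t)" by simp
  finally show ?thesis .
qed

lemma pointwise_K:
  fixes f :: "'a \<Rightarrow> real"
  assumes f: "continuous_on UNIV f" "\<And>x. \<bar>f x\<bar> \<le> C"
    and h: "\<And>n. h n \<ge> 0" "h \<longlonglongrightarrow> 0"
  shows "(\<lambda>n. \<integral>z. f z \<partial>K (h n) y) \<longlonglongrightarrow> f y"
proof -
  let ?phi = "\<lambda>t. \<integral>z. f z \<partial>K t y"
  have fm: "f \<in> borel_measurable borel" using f(1) by (rule borel_measurable_continuous_onI)
  have bd: "bounded (range f)" using f(2) by (auto simp: bounded_iff)
  have "(?phi \<longlongrightarrow> f y) (at_right 0)" using sc f(1) bd by (auto simp: stoch_continuous_def)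
  moreover have "?phi 0 = f y" using K_0 integral_return[of y borel f] fm by simp
  ultimately have "continuous (at 0 within {0..}) ?phi"
    by (simp add: continuous_within at_within_Ici_at_right)
  then show ?thesis using h unfolding continuous_within_sequentially
    using \<open>?phi 0 = f y\<close> by (auto simp: comp_def)
qed

lemma integral_bind_K:
  fixes f :: "'a \<Rightarrow> real"
  assumes "\<nu> \<in> M1" "t \<ge> 0" "f \<in> borel_measurable borel" "\<And>x. \<bar>f x\<bar> \<le> C"
  shows "(\<integral>y. f y \<partial>(\<nu> \<bind> K t)) = (\<integral>x. (\<integral>y. f y \<partial>K t x) \<partial>\<nu>)"
proof (rule integral_bind[where K=borel and B=C and B'=1])
  show "K t \<in> \<nu> \<rightarrow>\<^sub>M subprob_algebra borel" using K_sub[OF assms(2)] M1_D[OF assms(1)]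
    by (auto cong: measurable_cong_sets)
  show "finite_measure \<nu>" using M1_D[OF assms(1)] by (auto simp: prob_space_def)
  show "AE x in \<nu>. emeasure (K t x) (space (K t x)) \<le> ennreal 1"
    using K_x[OF assms(2)] by (simp add: prob_space.emeasure_space_1)
qed (use assms in auto)

lemma right_cont:
  fixes f :: "'a \<Rightarrow> real"
  assumes nu: "\<nu> \<in> M1" and p: "p \<ge> 0" and f: "continuous_on UNIV f" "\<And>x. \<bar>f x\<bar> \<le> C"
    and h: "\<And>n. h n \<ge> 0" "h \<longlonglongrightarrow> 0"
  shows "(\<lambda>n. \<integral>y. f y \<partial>(\<nu> \<bind> K (p + h n))) \<longlonglongrightarrow> (\<integral>y. f y \<partial>(\<nu> \<bind> K p))"
proof -
  have fm: "f \<in> borel_measurable borel" using f(1) by (rule borel_measurable_continuous_onI)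
  have nup: "\<nu> \<bind> K p \<in> M1" using M1_bind[OF nu p] .
  have eq: "(\<integral>y. f y \<partial>(\<nu> \<bind> K (p + h n))) = (\<integral>x. (\<integral>y. f y \<partial>K (h n) x) \<partial>(\<nu> \<bind> K p))" for n
    using bind_assoc_K[OF nu p h(1)[of n]] integral_bind_K[OF nup h(1)[of n] fm f(2)] by simp
  show ?thesis unfolding eq
  proof (rule integral_dominated_convergence[where w="\<lambda>_. C"])
    show "f \<in> borel_measurable (\<nu> \<bind> K p)" using fm M1_D[OF nup] by (simp cong: measurable_cong_sets)
    show "(\<lambda>x. \<integral>y. f y \<partial>K (h i) x) \<in> borel_measurable (\<nu> \<bind> K p)" for i
    proof -
      have "(\<lambda>M. integral\<^sup>L M f) \<in> subprob_algebra borel \<rightarrow>\<^sub>M borel" using fm by measurable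
      from measurable_comp[OF K_sub[OF h(1)[of i]] this]
      show ?thesis using M1_D[OF nup] by (simp add: comp_def cong: measurable_cong_sets)
    qed
    show "integrable (\<nu> \<bind> K p) (\<lambda>_. C)"
      using M1_D[OF nup] by (auto simp: prob_space_def intro: finite_measure.integrable_const)
    show "AE x in \<nu> \<bind> K p. (\<lambda>i. \<integral>y. f y \<partial>K (h i) x) \<longlonglongrightarrow> f x"
      using pointwise_K[OF f h] by simp
    show "AE x in \<nu> \<bind> K p. norm (\<integral>y. f y \<partial>K (h i) x) \<le> C" for i
    proof (rule AE_I2)
      fix x
      show "norm (\<integral>y. f y \<partial>K (h i) x) \<le> C"
        using prob_integral_bound[OF K_x(1)[OF h(1)[of i]] _ f(2)] fm K_x(2)[OF h(1)[of i]]
        by (simp cong: measurable_cong_sets)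
    qed
  qed
qed

lemma meas_int:
  fixes f :: "'a \<Rightarrow> real"
  assumes nu: "\<nu> \<in> M1" and f: "continuous_on UNIV f" "\<And>x. \<bar>f x\<bar> \<le> C"
  shows "(\<lambda>u. \<integral>y. f y \<partial>(\<nu> \<bind> K (max 0 u))) \<in> borel_measurable borel"
proof -
  define \<Phi> where "\<Phi> u = (\<integral>y. f y \<partial>(\<nu> \<bind> K (max 0 u)))" for u
  define v where "v n u = real_of_int \<lceil>real (Suc n) * u\<rceil> / real (Suc n)" for n u
  have vge: "v n u \<ge> u" for n u
  proof -
    have "real (Suc n) * u \<le> real_of_int \<lceil>real (Suc n) * u\<rceil>" by (rule le_of_int_ceiling)
    then show ?thesis unfolding v_def by (simp add: field_simps)
  qed
  have vle: "v n u \<le> u + inverse (real (Suc n))" for n u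
  proof -
    have "real_of_int \<lceil>real (Suc n) * u\<rceil> \<le> real (Suc n) * u + 1" by linarith
    then have "v n u \<le> (real (Suc n) * u + 1) / real (Suc n)" unfolding v_def
      by (intro divide_right_mono) auto
    also have "\<dots> = u + inverse (real (Suc n))" by (simp add: field_simps del: of_nat_Suc)
    finally show ?thesis .
  qed
  have vlim: "(\<lambda>n. v n u) \<longlonglongrightarrow> u" for u
  proof (rule tendsto_sandwich[where f="\<lambda>n. u" and h="\<lambda>n. u + inverse (real (Suc n))"])
    show "(\<lambda>n. u + inverse (real (Suc n))) \<longlonglongrightarrow> u"
      using tendsto_add[OF tendsto_const LIMSEQ_inverse_real_of_nat, of u] by simp
  qed (use vge vle in auto)
  show ?thesis unfolding \<Phi>_def[symmetric]
  proof (rule borel_measurable_LIMSEQ_real[where u="\<lambda>n u. \<Phi> (v n u)"])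
    fix u :: real
    define p where "p = max 0 u"
    define h where "h n = max 0 (v n u) - p" for n
    have h0: "h n \<ge> 0" for n unfolding h_def p_def using vge[of u n] by auto
    have hl: "h \<longlonglongrightarrow> 0"
    proof -
      have "(\<lambda>n. max 0 (v n u)) \<longlonglongrightarrow> max 0 u" by (intro tendsto_max tendsto_const vlim)
      then show ?thesis unfolding h_def p_def using Lim_null by (auto simp: LIM_zero_iff tendsto_diff)
    qed
    have "(\<lambda>n. \<integral>y. f y \<partial>(\<nu> \<bind> K (p + h n))) \<longlonglongrightarrow> (\<integral>y. f y \<partial>(\<nu> \<bind> K p))"
      by (rule right_cont[OF nu _ f h0 hl]) (simp add: p_def)
    moreover have "p + h n = max 0 (v n u)" for n by (simp add: h_def)
    ultimately show "(\<lambda>n. \<Phi> (v n u)) \<longlonglongrightarrow> \<Phi> u" by (simp add: \<Phi>_def p_def)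
  next
    fix n
    have "(\<lambda>u. (\<lambda>z::int. \<Phi> (real_of_int z / real (Suc n))) \<lceil>real (Suc n) * u\<rceil>) \<in> borel_measurable borel"
      by (rule measurable_compose_countable[where f="\<lambda>z u. \<Phi> (real_of_int z / real (Suc n))"]) measurable
    then show "(\<lambda>u. \<Phi> (v n u)) \<in> borel_measurable borel" by (simp add: v_def)
  qed
qed

lemma M1_bindmax: "\<nu> \<in> M1 \<Longrightarrow> \<nu> \<bind> K (max 0 u) \<in> M1"
  by (rule M1_bind) auto

lemma meas_open:
  assumes nu: "\<nu> \<in> M1" and U: "open U"
  shows "(\<lambda>u. measure (\<nu> \<bind> K (max 0 u)) U) \<in> borel_measurable borel"
proof (cases "U = UNIV")
  case True
  have "measure (\<nu> \<bind> K (max 0 u)) U = 1" for u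
    using M1_D[OF M1_bindmax[OF nu, of u]] True prob_space.prob_space by fastforce
  then show ?thesis by simp
next
  case False
  define f where "f n x = min 1 (real n * infdist x (- U))" for n x
  have fc: "continuous_on UNIV (f n)" for n unfolding f_def
    by (intro continuous_intros continuous_on_infdist continuous_on_id)
  have fb: "\<bar>f n x\<bar> \<le> 1" for n x unfolding f_def using infdist_nonneg[of x "-U"] by auto
  have flim: "(\<lambda>n. f n x) \<longlonglongrightarrow> indicator U x" for x
  proof (cases "x \<in> U")
    case True
    have d: "infdist x (- U) > 0"
      using infdist_pos_not_in_closed[of "-U" x] U False True by auto
    obtain N where N: "1 < real N * infdist x (- U)" using ex_less_of_nat_mult[OF d] by blast
    have "eventually (\<lambda>n. f n x = indicator U x) sequentially"
      unfolding eventually_sequentially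
    proof (intro exI allI impI)
      fix n assume "N \<le> n"
      then have "real N * infdist x (- U) \<le> real n * infdist x (- U)"
        using d by (intro mult_right_mono) auto
      then show "f n x = indicator U x" using N True by (auto simp: f_def)
    qed
    then show ?thesis by (rule tendsto_eventually)
  next
    case False
    then show ?thesis by (simp add: f_def)
  qed
  show ?thesis
  proof (rule borel_measurable_LIMSEQ_real[where u="\<lambda>n u. \<integral>y. f n y \<partial>(\<nu> \<bind> K (max 0 u))"])
    show "(\<lambda>u. \<integral>y. f n y \<partial>(\<nu> \<bind> K (max 0 u))) \<in> borel_measurable borel" for n
      by (rule meas_int[OF nu fc fb])
    fix u
    let ?P = "\<nu> \<bind> K (max 0 u)"
    have P: "prob_space ?P" "sets ?P = sets borel" "space ?P = UNIV" using M1_D[OF M1_bindmax[OF nu]] by auto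
    have "(\<lambda>n. \<integral>y. f n y \<partial>?P) \<longlonglongrightarrow> (\<integral>y. indicator U y \<partial>?P)"
    proof (rule integral_dominated_convergence[where w="\<lambda>_. 1"])
      show "indicator U \<in> borel_measurable ?P" using U P by (simp cong: measurable_cong_sets)
      show "f i \<in> borel_measurable ?P" for i
        using borel_measurable_continuous_onI[OF fc] P by (simp cong: measurable_cong_sets)
      show "integrable ?P (\<lambda>_. 1)" using P by (auto simp: prob_space_def intro: finite_measure.integrable_const)
    qed (use flim fb in auto)
    then show "(\<lambda>n. \<integral>y. f n y \<partial>?P) \<longlonglongrightarrow> measure ?P U" using P by simp
  qed
qed

lemma meas_set:
  assumes nu: "\<nu> \<in> M1" and B: "B \<in> sets borel"
  shows "(\<lambda>u. measure (\<nu> \<bind> K (max 0 u)) B) \<in> borel_measurable borel"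
proof -
  have st: "Int_stable {S::'a set. open S}" by (auto simp: Int_stable_def)
  have cl: "{S::'a set. open S} \<subseteq> Pow UNIV" by auto
  have B': "B \<in> sigma_sets UNIV {S. open S}" using B by (simp add: sets_borel)
  from st cl B' show ?thesis
proof (induction rule: sigma_sets_induct_disjoint)
  case (basic A)
  then show ?case using meas_open[OF nu] by auto
next
  case empty
  then show ?case by simp
next
  case (compl A)
  have "measure (\<nu> \<bind> K (max 0 u)) (UNIV - A) = 1 - measure (\<nu> \<bind> K (max 0 u)) A" for u
  proof -
    let ?P = "\<nu> \<bind> K (max 0 u)"
    have P: "prob_space ?P" "sets ?P = sets borel" "space ?P = UNIV" using M1_D[OF M1_bindmax[OF nu]] by auto
    have "A \<in> sets ?P" using compl(1) P by (simp add: sets_borel)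
    from prob_space.prob_compl[OF P(1) this] P(3) show ?thesis by simp
  qed
  then show ?case using compl(2) by simp
next
  case (union A)
  have "(\<lambda>i. measure (\<nu> \<bind> K (max 0 u)) (A i)) sums measure (\<nu> \<bind> K (max 0 u)) (\<Union>i. A i)" for u
  proof -
    let ?P = "\<nu> \<bind> K (max 0 u)"
    have P: "prob_space ?P" "sets ?P = sets borel" "space ?P = UNIV" using M1_D[OF M1_bindmax[OF nu]] by auto
    have "range A \<subseteq> sets ?P" using union(2) P by (simp add: sets_borel)
    then show ?thesis using finite_measure.finite_measure_UNION[of ?P A] P(1) union(1)
      by (auto simp: prob_space_def)
  qed
  note sm = this
  show ?case
  proof (rule borel_measurable_LIMSEQ_real[where u="\<lambda>n u. \<Sum>i<n. measure (\<nu> \<bind> K (max 0 u)) (A i)"])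
    show "(\<lambda>u. \<Sum>i<n. measure (\<nu> \<bind> K (max 0 u)) (A i)) \<in> borel_measurable borel" for n
      using union(3) by (intro borel_measurable_sum) 
    fix u show "(\<lambda>n. \<Sum>i<n. measure (\<nu> \<bind> K (max 0 u)) (A i)) \<longlonglongrightarrow> measure (\<nu> \<bind> K (max 0 u)) (\<Union>i. A i)"
      using sm[of u] by (simp add: sums_def)
  qed
qed
qed

lemma F_meas:
  assumes nu: "\<nu> \<in> M1"
  shows "(\<lambda>u. \<nu> \<bind> K (max 0 u)) \<in> borel \<rightarrow>\<^sub>M prob_algebra borel"
proof (rule measurable_prob_algebraI)
  show "prob_space (\<nu> \<bind> K (max 0 u))" for u using M1_D[OF M1_bindmax[OF nu]] by auto
  show "(\<lambda>u. \<nu> \<bind> K (max 0 u)) \<in> borel \<rightarrow>\<^sub>M subprob_algebra borel"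
  proof (rule measurable_subprob_algebra)
    show "subprob_space (\<nu> \<bind> K (max 0 u))" for u
      using M1_D[OF M1_bindmax[OF nu]] by (auto intro: prob_space_imp_subprob_space)
    show "sets (\<nu> \<bind> K (max 0 u)) = sets borel" for u using M1_D[OF M1_bindmax[OF nu]] by auto
    fix A :: "'a set" assume A: "A \<in> sets borel"
    have "emeasure (\<nu> \<bind> K (max 0 u)) A = ennreal (measure (\<nu> \<bind> K (max 0 u)) A)" for u
      using M1_D[OF M1_bindmax[OF nu]] by (simp add: finite_measure.emeasure_eq_measure prob_space_def)
    then show "(\<lambda>u. emeasure (\<nu> \<bind> K (max 0 u)) A) \<in> borel_measurable borel"
      using meas_set[OF nu A] by simp
  qed
qed

lemma F_meas_l:
  assumes nu: "\<nu> \<in> M1"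
  shows "(\<lambda>u. \<nu> \<bind> K (max 0 u)) \<in> lborel \<rightarrow>\<^sub>M prob_algebra borel"
  using F_meas[OF nu] by (simp cong: measurable_cong_sets)

lemma U_space: fixes T :: real assumes "T > 0" shows "uniform_measure lborel {0..T} \<in> space (prob_algebra lborel)"
proof -
  have "emeasure lborel {0..T} = ennreal T" using assms by simp
  then show ?thesis using assms by (auto simp: space_prob_algebra intro!: prob_space_uniform_measure)
qed

lemma Q_eq:
  assumes nu: "\<nu> \<in> M1" and T: "T > 0"
  shows "Qavg K T \<nu> = uniform_measure lborel {0..T} \<bind> (\<lambda>u. \<nu> \<bind> K (max 0 u))"
proof -
  let ?U = "uniform_measure lborel {0..T}"
  let ?R = "?U \<bind> (\<lambda>u. \<nu> \<bind> K (max 0 u))"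
  have sR: "sets ?R = sets borel" by (rule sets_bind'[OF U_space[OF T] F_meas_l[OF nu]])
  then have spR: "space ?R = UNIV" using sets_eq_imp_space_eq[of ?R borel] by simp
  have "?R = measure_of UNIV (sets borel) (emeasure ?R)"
    using measure_of_of_measure[of ?R] sR spR by simp
  also have "\<dots> = Qavg K T \<nu>" unfolding Qavg_def space_borel
  proof (rule measure_of_eq)
    show "sets borel \<subseteq> Pow UNIV" by auto
    fix a :: "'a set" assume "a \<in> sigma_sets UNIV (sets borel)"
    then have a: "a \<in> sets borel" by (metis sets.sigma_sets_eq space_borel)
    have "emeasure ?R a = (\<integral>\<^sup>+u. emeasure (\<nu> \<bind> K (max 0 u)) a \<partial>?U)"
      by (rule emeasure_bind_prob_algebra[OF U_space[OF T] F_meas_l[OF nu] a])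
    also have "\<dots> = (\<integral>\<^sup>+u. emeasure (\<nu> \<bind> K (max 0 u)) a * indicator {0..T} u \<partial>lborel) / emeasure lborel {0..T}"
      by (rule nn_integral_uniform_measure)
         (use measurable_compose[OF measurable_prob_algebraD[OF F_meas_l[OF nu]] measurable_emeasure_subprob_algebra[OF a]] in auto)
    also have "(\<integral>\<^sup>+u. emeasure (\<nu> \<bind> K (max 0 u)) a * indicator {0..T} u \<partial>lborel)
        = (\<integral>\<^sup>+s. emeasure (Pstar K s \<nu>) a * indicator {0..T} s \<partial>lborel)"
      by (rule nn_integral_cong) (auto simp: Pstar_def indicator_def)
    finally show "emeasure ?R a = ennreal (1 / T) * (\<integral>\<^sup>+s\<in>{0..T}. emeasure (Pstar K s \<nu>) a \<partial>lborel)"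
      using T by (simp add: divide_ennreal_def inverse_ennreal mult.commute inverse_eq_divide)
  qed
  finally show ?thesis by simp
qed

lemma Q_M1: assumes nu: "\<nu> \<in> M1" and T: "T > 0" shows "Qavg K T \<nu> \<in> M1"
  unfolding Q_eq[OF nu T] M1_def
  using prob_space_bind'[OF U_space[OF T] F_meas_l[OF nu]] sets_bind'[OF U_space[OF T] F_meas_l[OF nu]]
  by auto

lemma g_meas: assumes nu: "\<nu> \<in> M1" and B: "B \<in> sets borel"
  shows "(\<lambda>u. emeasure (\<nu> \<bind> K (max 0 u)) B) \<in> borel_measurable borel"
  using measurable_compose[OF measurable_prob_algebraD[OF F_meas[OF nu]] measurable_emeasure_subprob_algebra[OF B]] .

lemma g_le1: assumes nu: "\<nu> \<in> M1" shows "emeasure (\<nu> \<bind> K (max 0 u)) B \<le> 1"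
  using M1_D(1)[OF M1_bindmax[OF nu]] by (rule prob_space.emeasure_le_1)

lemma Q_emeasure:
  assumes nu: "\<nu> \<in> M1" and T: "T > 0" and B: "B \<in> sets borel"
  shows "emeasure (Qavg K T \<nu>) B = (\<integral>\<^sup>+u. emeasure (\<nu> \<bind> K (max 0 u)) B * indicator {0..T} u \<partial>lborel) / ennreal T"
proof -
  have "emeasure (Qavg K T \<nu>) B = (\<integral>\<^sup>+u. emeasure (\<nu> \<bind> K (max 0 u)) B \<partial>uniform_measure lborel {0..T})"
    unfolding Q_eq[OF nu T] by (rule emeasure_bind_prob_algebra[OF U_space[OF T] F_meas_l[OF nu] B])
  also have "\<dots> = (\<integral>\<^sup>+u. emeasure (\<nu> \<bind> K (max 0 u)) B * indicator {0..T} u \<partial>lborel) / emeasure lborel {0..T}"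
    by (rule nn_integral_uniform_measure) (use g_meas[OF nu B] in auto)
  also have "emeasure lborel {0..T} = ennreal T" using T by simp
  finally show ?thesis .
qed

lemma QK_emeasure:
  assumes nu: "\<nu> \<in> M1" and t: "t > 0" and s: "s \<ge> 0" and B: "B \<in> sets borel"
  shows "emeasure (Qavg K t \<nu> \<bind> K s) B = (\<integral>\<^sup>+r. emeasure (\<nu> \<bind> K (max 0 (r + s))) B * indicator {0..t} r \<partial>lborel) / ennreal t"
proof -
  let ?U = "uniform_measure lborel {0..t}"
  let ?F = "\<lambda>u. \<nu> \<bind> K (max 0 u)"
  have Qs: "Qavg K t \<nu> \<in> space (prob_algebra borel)" using Q_M1[OF nu t] by (rule M1_space)
  have hm: "(\<lambda>x. emeasure (K s x) B) \<in> borel_measurable borel"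
    using measurable_compose[OF K_sub[OF s] measurable_emeasure_subprob_algebra[OF B]] .
  have "emeasure (Qavg K t \<nu> \<bind> K s) B = (\<integral>\<^sup>+x. emeasure (K s x) B \<partial>Qavg K t \<nu>)"
    by (rule emeasure_bind_prob_algebra[OF Qs K_prob[OF s] B])
  also have "\<dots> = (\<integral>\<^sup>+r. \<integral>\<^sup>+x. emeasure (K s x) B \<partial>?F r \<partial>?U)"
    unfolding Q_eq[OF nu t]
    by (rule nn_integral_bind[OF hm]) (use measurable_prob_algebraD[OF F_meas_l[OF nu]] in \<open>simp cong: measurable_cong_sets\<close>)
  also have "\<dots> = (\<integral>\<^sup>+r. emeasure (\<nu> \<bind> K (max 0 (max 0 r + s))) B \<partial>?U)"
  proof (rule nn_integral_cong)
    fix r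
    have "(\<integral>\<^sup>+x. emeasure (K s x) B \<partial>?F r) = emeasure (?F r \<bind> K s) B"
      by (rule emeasure_bind_prob_algebra[OF M1_space[OF M1_bindmax[OF nu]] K_prob[OF s] B, symmetric])
    also have "?F r \<bind> K s = \<nu> \<bind> K (max 0 r + s)" by (rule bind_assoc_K[OF nu _ s]) simp
    finally show "(\<integral>\<^sup>+x. emeasure (K s x) B \<partial>?F r) = emeasure (\<nu> \<bind> K (max 0 (max 0 r + s))) B"
      using s by simp
  qed
  also have "\<dots> = (\<integral>\<^sup>+r. emeasure (\<nu> \<bind> K (max 0 (max 0 r + s))) B * indicator {0..t} r \<partial>lborel) / emeasure lborel {0..t}"
  proof (rule nn_integral_uniform_measure)
    show "(\<lambda>r. emeasure (\<nu> \<bind> K (max 0 (max 0 r + s))) B) \<in> borel_measurable lborel"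
      using measurable_compose[of "\<lambda>r. max 0 r + s" lborel borel, OF _ g_meas[OF nu B]] by simp
  qed simp
  also have "(\<integral>\<^sup>+r. emeasure (\<nu> \<bind> K (max 0 (max 0 r + s))) B * indicator {0..t} r \<partial>lborel)
      = (\<integral>\<^sup>+r. emeasure (\<nu> \<bind> K (max 0 (r + s))) B * indicator {0..t} r \<partial>lborel)"
    by (rule nn_integral_cong) (auto simp: indicator_def)
  also have "emeasure lborel {0..t} = ennreal t" using t by simp
  finally show ?thesis .
qed

lemma step:
  assumes nu: "\<nu> \<in> M1" and t: "t > 0" and T: "T > 0" and B: "B \<in> sets borel"
  shows "\<bar>measure (Qavg K T (Qavg K t \<nu>)) B - measure (Qavg K T \<nu>) B\<bar> \<le> t / T"
proof -
  define g where "g u = emeasure (\<nu> \<bind> K (max 0 u)) B" for u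
  have gm[measurable]: "g \<in> borel_measurable borel" unfolding g_def by (rule g_meas[OF nu B])
  have g1: "g u \<le> 1" for u unfolding g_def by (rule g_le1[OF nu])
  define y where "y = (\<integral>\<^sup>+u. g u * indicator {0..T} u \<partial>lborel)"
  define X where "X = (\<integral>\<^sup>+s. (\<integral>\<^sup>+r. g (r + s) * indicator {0..t} r \<partial>lborel) * indicator {0..T} s \<partial>lborel)"
  have b1: "X \<le> ennreal t * y + ennreal (t * t)" and b2: "ennreal t * y \<le> X + ennreal (t * t)"
    using double_bounds[OF gm g1 t, of T] by (simp_all add: X_def y_def)
  have eQ: "emeasure (Qavg K T \<nu>) B = y / ennreal T"
    unfolding Q_emeasure[OF nu T B] y_def g_def ..
  have jm: "(\<lambda>(s, r). g (r + s) * indicator {0..t} r) \<in> borel_measurable (lborel \<Otimes>\<^sub>M lborel)"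
    by measurable
  have im: "(\<lambda>s. (\<integral>\<^sup>+r. g (r + s) * indicator {0..t} r \<partial>lborel)) \<in> borel_measurable lborel"
    using jm by (rule lborel.borel_measurable_nn_integral)
  have eQQ: "emeasure (Qavg K T (Qavg K t \<nu>)) B = X / ennreal t / ennreal T"
  proof -
    have "emeasure (Qavg K T (Qavg K t \<nu>)) B =
      (\<integral>\<^sup>+s. emeasure (Qavg K t \<nu> \<bind> K (max 0 s)) B * indicator {0..T} s \<partial>lborel) / ennreal T"
      by (rule Q_emeasure[OF Q_M1[OF nu t] T B])
    also have "(\<integral>\<^sup>+s. emeasure (Qavg K t \<nu> \<bind> K (max 0 s)) B * indicator {0..T} s \<partial>lborel)
       = (\<integral>\<^sup>+s. (\<integral>\<^sup>+r. g (r + s) * indicator {0..t} r \<partial>lborel) * indicator {0..T} s / ennreal t \<partial>lborel)"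
    proof (rule nn_integral_cong)
      fix s :: real
      show "emeasure (Qavg K t \<nu> \<bind> K (max 0 s)) B * indicator {0..T} s =
        (\<integral>\<^sup>+r. g (r + s) * indicator {0..t} r \<partial>lborel) * indicator {0..T} s / ennreal t"
      proof (cases "s \<ge> 0")
        case True
        then show ?thesis using QK_emeasure[OF nu t True B]
          by (simp add: g_def ennreal_times_divide mult.commute)
      next
        case False
        then show ?thesis by simp
      qed
    qed
    also have "\<dots> = X / ennreal t" unfolding X_def
      by (rule nn_integral_divide) (use im in simp)
    finally show ?thesis .
  qed
  have yT: "y \<le> ennreal T" unfolding y_def using int_ind_le[OF g1, of 0 T] T by simp
  have yfin: "y < top" using yT by (simp add: le_less_trans)
  have Xfin: "X < top" using b1 yfin by (simp add: le_less_trans ennreal_mult_less_top)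
  define Xr where "Xr = enn2real X"
  define yr where "yr = enn2real y"
  have Xe: "X = ennreal Xr" and ye: "y = ennreal yr" and Xr0: "Xr \<ge> 0" and yr0: "yr \<ge> 0"
    using Xfin yfin by (auto simp: Xr_def yr_def)
  have c1: "Xr \<le> t * yr + t * t"
  proof -
    have e: "ennreal t * y + ennreal (t * t) = ennreal (t * yr + t * t)" using t yr0 unfolding ye
      by (simp add: ennreal_mult ennreal_plus)
    have "ennreal Xr \<le> ennreal (t * yr + t * t)" using b1 unfolding e Xe .
    then show ?thesis using t yr0 ennreal_le_iff[of "t * yr + t * t" Xr] by simp
  qed
  have c2: "t * yr \<le> Xr + t * t"
  proof -
    have e1: "ennreal t * y = ennreal (t * yr)" using t yr0 unfolding ye by (simp add: ennreal_mult)
    have e2: "X + ennreal (t * t) = ennreal (Xr + t * t)" using t Xr0 unfolding Xe by (simp add: ennreal_plus)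
    have "ennreal (t * yr) \<le> ennreal (Xr + t * t)" using b2 unfolding e1 e2 .
    then show ?thesis using t Xr0 ennreal_le_iff[of "Xr + t * t" "t * yr"] by simp
  qed
  have m1: "measure (Qavg K T (Qavg K t \<nu>)) B = Xr / t / T"
    unfolding measure_def eQQ Xe using t T Xr0 by (simp add: divide_ennreal)
  have m2: "measure (Qavg K T \<nu>) B = yr / T"
    unfolding measure_def eQ ye using T yr0 by (simp add: divide_ennreal)
  have "Xr / t / T - yr / T = (Xr - t * yr) / (t * T)" using t T by (simp add: field_simps)
  moreover have "\<bar>Xr - t * yr\<bar> \<le> t * t" using c1 c2 by linarith
  ultimately have "\<bar>Xr / t / T - yr / T\<bar> \<le> (t * t) / (t * T)"
  proof -
    assume a: "Xr / t / T - yr / T = (Xr - t * yr) / (t * T)" "\<bar>Xr - t * yr\<bar> \<le> t * t"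
    have "\<bar>(Xr - t * yr) / (t * T)\<bar> = \<bar>Xr - t * yr\<bar> / (t * T)" using t T by (simp add: abs_divide)
    also have "\<dots> \<le> (t * t) / (t * T)" using a(2) t T by (intro divide_right_mono) auto
    finally show ?thesis using a(1) by simp
  qed
  also have "\<dots> = t / T" using t by simp
  finally show ?thesis unfolding m1 m2 .
qed

lemma Qiter_M1: "\<nu> \<in> M1 \<Longrightarrow> \<forall>t\<in>set ts. t > 0 \<Longrightarrow> Qiter K ts \<nu> \<in> M1"
proof (induction ts arbitrary: \<nu>)
  case Nil
  then show ?case by (simp add: Qiter_def)
next
  case (Cons t ts)
  have "Qavg K t \<nu> \<in> M1" using Q_M1 Cons.prems by simp
  then have "Qiter K ts (Qavg K t \<nu>) \<in> M1" using Cons.IH Cons.prems by simp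
  then show ?case by (simp add: Qiter_def)
qed

lemma tele:
  assumes mu: "\<mu> \<in> M1" and T: "T > 0" and B: "B \<in> sets borel"
  shows "\<forall>t\<in>set ts. t > 0 \<Longrightarrow> \<bar>measure (Qavg K T (Qiter K ts \<mu>)) B - measure (Qavg K T \<mu>) B\<bar> \<le> sum_list ts / T"
proof (induction ts rule: rev_induct)
  case Nil
  then show ?case by (simp add: Qiter_def)
next
  case (snoc t ts)
  have nu: "Qiter K ts \<mu> \<in> M1" using Qiter_M1[OF mu] snoc.prems by simp
  have t: "t > 0" using snoc.prems by simp
  have q: "Qiter K (ts @ [t]) \<mu> = Qavg K t (Qiter K ts \<mu>)" by (simp add: Qiter_def)
  have "\<bar>measure (Qavg K T (Qavg K t (Qiter K ts \<mu>))) B - measure (Qavg K T (Qiter K ts \<mu>)) B\<bar> \<le> t / T"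
    by (rule step[OF nu t T B])
  moreover have "\<bar>measure (Qavg K T (Qiter K ts \<mu>)) B - measure (Qavg K T \<mu>) B\<bar> \<le> sum_list ts / T"
    using snoc by simp
  ultimately show ?case unfolding q by (simp add: add_divide_distrib)
qed

end

lemma tv_bound:
  assumes "\<And>B. B \<in> sets borel \<Longrightarrow> \<bar>measure M B - measure N B\<bar> \<le> c"
  shows "tv_norm M N \<le> 2 * c" "0 \<le> tv_norm M N"
proof -
  have ne: "sets (borel :: 'a measure) \<noteq> {}" by auto
  have bdd: "bdd_above ((\<lambda>B. \<bar>measure M B - measure N B\<bar>) ` sets borel)"
    by (rule bdd_aboveI2[where M=c]) (rule assms)
  have "(SUP B\<in>sets borel. \<bar>measure M B - measure N B\<bar>) \<le> c"
    using assms ne by (intro cSUP_least) auto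
  then show "tv_norm M N \<le> 2 * c" by (simp add: tv_norm_def)
  have "0 \<le> (SUP B\<in>sets borel. \<bar>measure M B - measure N B\<bar>)"
    using bdd by (intro cSUP_upper2[where x="{}"]) auto
  then show "0 \<le> tv_norm M N" by (simp add: tv_norm_def)
qed

theorem lemma2:
  fixes K :: "real \<Rightarrow> 'a::polish_space \<Rightarrow> 'a measure"
    and ts :: "real list"
  assumes "transition_semigroup K" and "feller K" and "stoch_continuous K"
    and "ts \<noteq> []" and "\<forall>t\<in>set ts. t > 0"
  shows "Limsup at_top (\<lambda>T::real. SUP \<mu>\<in>M1. ereal (tv_norm (Qavg K T (Qiter K ts \<mu>)) (Qavg K T \<mu>))) = 0"
proof -
  interpret tsg K using assms by (simp add: tsg_def)
  define S where "S = sum_list ts"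
  define f where "f T = (SUP \<mu>\<in>M1. ereal (tv_norm (Qavg K T (Qiter K ts \<mu>)) (Qavg K T \<mu>)))" for T
  have M1ne: "return borel undefined \<in> M1"
    by (auto simp: M1_def intro: prob_space_return)
  have bnd: "0 \<le> f T \<and> f T \<le> ereal (2 * (S / T))" if T: "T > 0" for T
  proof -
    have tvb: "tv_norm (Qavg K T (Qiter K ts \<mu>)) (Qavg K T \<mu>) \<le> 2 * (S / T)"
      "0 \<le> tv_norm (Qavg K T (Qiter K ts \<mu>)) (Qavg K T \<mu>)" if mu: "\<mu> \<in> M1" for \<mu>
      using tv_bound[OF tele[OF mu T _ assms(5)]] by (simp_all add: S_def)
    have "f T \<le> ereal (2 * (S / T))" unfolding f_def using tvb by (intro SUP_least) auto
    moreover have "0 \<le> f T" unfolding f_def using tvb(2)[OF M1ne]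
      by (intro SUP_upper2[OF M1ne]) auto
    ultimately show ?thesis by simp
  qed
  have lim0: "((\<lambda>T::real. 2 * S / T) \<longlongrightarrow> 0) at_top"
    by (rule tendsto_divide_0[OF tendsto_const filterlim_at_top_imp_at_infinity[OF filterlim_ident]])
  have "(f \<longlongrightarrow> 0) at_top"
  proof (rule tendsto_sandwich[where f="\<lambda>_. 0" and h="\<lambda>T. ereal (2 * (S / T))"])
    show "eventually (\<lambda>T. 0 \<le> f T) at_top"
      by (rule eventually_mono[OF eventually_gt_at_top[of "0::real"]]) (use bnd in auto)
    show "eventually (\<lambda>T. f T \<le> ereal (2 * (S / T))) at_top"
      by (rule eventually_mono[OF eventually_gt_at_top[of "0::real"]]) (use bnd in auto)
    show "((\<lambda>T. ereal (2 * (S / T))) \<longlongrightarrow> 0) at_top"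
      using lim0 tendsto_ereal[OF lim0] by (simp add: zero_ereal_def)
  qed simp
  then have "Limsup at_top f = 0" by (intro lim_imp_Limsup) simp
  then show ?thesis unfolding f_def[abs_def] .
qed

end
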